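(* Let $\Gamma=(V,E)$ be a Veldkamp $n$-gon ($n\ge 2$) and suppose that the local opposition relation $\equiv_v$ is trivial for some $v\in V$. Then $\equiv_w$ is trivial for every $w\in V$ with ${\rm dist}(v,w)$ even. If moreover $n$ is odd, then $\equiv_w$ is trivial for all $w\in V$.
   Context: A graph is a pair $(V,E)$ with $E$ a set of $2$-element subsets of $V$; $\Gamma_v$ is the set of neighbors of $v$. An $s$-path is a sequence $(x_0,\dots,x_s)$ of vertices with consecutive vertices adjacent and $x_{i-2}\ne x_i$ for $i\in[2,s]$; ${\rm dist}$ is graph distance. A closed $s$-path is an $s$-path with $s\ge3$ whose first and last vertices coincide; an $s$-circuit is the subgraph determined by a closed $s$-path. An opposition relation on a set $X$ is a symmetric anti-reflexive relation; it is trivial if any two distinct elements are related; it is $k$-plump if for every $S\subseteq X$ with $|S|\le k$ some element of $X$ is related to all elements of $S$. A Veldkamp graph is a graph with a $2$-plump opposition relation $\equiv_v$ on $\Gamma_v$ for each vertex $v$. A path $(v_0,\dots,v_s)$ is straight if $v_{i-1}\equiv_{v_i}v_{i+1}$ for all $i\in[1,s-1]$; a circuit is straight if every path in it is straight. A Veldkamp $n$-gon ($n\ge2$) is a Veldkamp graph satisfying (VP1) connected and bipartite; (VP2) for each $k\in[1,n-1]$ each straight $k$-path is the unique straight path between its endpoints of length at most $k$; (VP3) every straight $(n+1)$-path lies in a straight $2n$-circuit. *)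

theory Defs
  imports Main
begin

definition graph :: "'a set \<Rightarrow> 'a set set \<Rightarrow> bool" where
  "graph V E \<longleftrightarrow> (\<forall>e\<in>E. \<exists>x y. x \<in> V \<and> y \<in> V \<and> x \<noteq> y \<and> e = {x, y})"

definition nbrs :: "'a set set \<Rightarrow> 'a \<Rightarrow> 'a set" where
  "nbrs E v = {u. {u, v} \<in> E}"

definition is_walk :: "'a set \<Rightarrow> 'a set set \<Rightarrow> 'a list \<Rightarrow> nat \<Rightarrow> bool" where
  "is_walk V E xs s \<longleftrightarrow> length xs = Suc s \<and> set xs \<subseteq> V \<and>
     (\<forall>i<s. {xs ! i, xs ! Suc i} \<in> E)"

definition is_path :: "'a set \<Rightarrow> 'a set set \<Rightarrow> 'a list \<Rightarrow> nat \<Rightarrow> bool" where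
  "is_path V E xs s \<longleftrightarrow> is_walk V E xs s \<and>
     (\<forall>i. 2 \<le> i \<and> i \<le> s \<longrightarrow> xs ! (i - 2) \<noteq> xs ! i)"

definition gdist :: "'a set \<Rightarrow> 'a set set \<Rightarrow> 'a \<Rightarrow> 'a \<Rightarrow> nat" where
  "gdist V E v w = (LEAST k. \<exists>xs. is_walk V E xs k \<and> hd xs = v \<and> last xs = w)"

definition connected_graph :: "'a set \<Rightarrow> 'a set set \<Rightarrow> bool" where
  "connected_graph V E \<longleftrightarrow>
     (\<forall>v\<in>V. \<forall>w\<in>V. \<exists>xs k. is_walk V E xs k \<and> hd xs = v \<and> last xs = w)"

definition bipartite_graph :: "'a set \<Rightarrow> 'a set set \<Rightarrow> bool" where
  "bipartite_graph V E \<longleftrightarrow> (\<exists>c :: 'a \<Rightarrow> bool. \<forall>x\<in>V. \<forall>y\<in>V. {x, y} \<in> E \<longrightarrow> c x \<noteq> c y)"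

definition opposition_rel :: "'a set \<Rightarrow> ('a \<Rightarrow> 'a \<Rightarrow> bool) \<Rightarrow> bool" where
  "opposition_rel X R \<longleftrightarrow> (\<forall>x y. R x y \<longrightarrow> x \<in> X \<and> y \<in> X) \<and>
     (\<forall>x y. R x y \<longrightarrow> R y x) \<and> (\<forall>x. \<not> R x x)"

definition trivial_opp :: "'a set \<Rightarrow> ('a \<Rightarrow> 'a \<Rightarrow> bool) \<Rightarrow> bool" where
  "trivial_opp X R \<longleftrightarrow> (\<forall>x\<in>X. \<forall>y\<in>X. x \<noteq> y \<longrightarrow> R x y)"

definition plump :: "nat \<Rightarrow> 'a set \<Rightarrow> ('a \<Rightarrow> 'a \<Rightarrow> bool) \<Rightarrow> bool" where
  "plump k X R \<longleftrightarrow> (\<forall>S. S \<subseteq> X \<and> finite S \<and> card S \<le> k \<longrightarrow> (\<exists>x\<in>X. \<forall>s\<in>S. R x s))"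

text \<open>opp v x y means x \<equiv>_v y.\<close>
definition veldkamp_graph :: "'a set \<Rightarrow> 'a set set \<Rightarrow> ('a \<Rightarrow> 'a \<Rightarrow> 'a \<Rightarrow> bool) \<Rightarrow> bool" where
  "veldkamp_graph V E opp \<longleftrightarrow> graph V E \<and>
     (\<forall>v\<in>V. opposition_rel (nbrs E v) (opp v) \<and> plump 2 (nbrs E v) (opp v))"

definition straight :: "('a \<Rightarrow> 'a \<Rightarrow> 'a \<Rightarrow> bool) \<Rightarrow> 'a list \<Rightarrow> bool" where
  "straight opp xs \<longleftrightarrow> (\<forall>i. 1 \<le> i \<and> i + 1 < length xs \<longrightarrow> opp (xs ! i) (xs ! (i - 1)) (xs ! (i + 1)))"

definition closed_path :: "'a set \<Rightarrow> 'a set set \<Rightarrow> 'a list \<Rightarrow> nat \<Rightarrow> bool" where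
  "closed_path V E xs s \<longleftrightarrow> is_path V E xs s \<and> 3 \<le> s \<and> hd xs = last xs"

definition path_edges :: "'a list \<Rightarrow> 'a set set" where
  "path_edges xs = {{xs ! i, xs ! Suc i} | i. Suc i < length xs}"

definition straight_circuit :: "('a \<Rightarrow> 'a \<Rightarrow> 'a \<Rightarrow> bool) \<Rightarrow> 'a list \<Rightarrow> bool" where
  "straight_circuit opp c \<longleftrightarrow>
     (\<forall>xs s. is_path (set c) (path_edges c) xs s \<longrightarrow> straight opp xs)"

definition veldkamp_ngon :: "'a set \<Rightarrow> 'a set set \<Rightarrow> ('a \<Rightarrow> 'a \<Rightarrow> 'a \<Rightarrow> bool) \<Rightarrow> nat \<Rightarrow> bool" where
  "veldkamp_ngon V E opp n \<longleftrightarrow> 2 \<le> n \<and> veldkamp_graph V E opp \<and>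
     connected_graph V E \<and> bipartite_graph V E \<and>
     (\<forall>k. 1 \<le> k \<and> k \<le> n - 1 \<longrightarrow>
        (\<forall>p. is_path V E p k \<and> straight opp p \<longrightarrow>
           (\<forall>q j. is_path V E q j \<and> straight opp q \<and> j \<le> k \<and>
                  hd q = hd p \<and> last q = last p \<longrightarrow> q = p))) \<and>
     (\<forall>p. is_path V E p (n + 1) \<and> straight opp p \<longrightarrow>
        (\<exists>c. closed_path V E c (2 * n) \<and> straight_circuit opp c \<and>
             set p \<subseteq> set c \<and> path_edges p \<subseteq> path_edges c))"

end

theory Submission
  imports Defs
begin

locale vk =
  fixes V :: "'a set" and E :: "'a set set" and opp :: "'a \<Rightarrow> 'a \<Rightarrow> 'a \<Rightarrow> bool" and n :: nat
  assumes ngon: "veldkamp_ngon V E opp n"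
begin

lemma n2: "2 \<le> n" using ngon unfolding veldkamp_ngon_def by auto

lemma vg: "veldkamp_graph V E opp" using ngon unfolding veldkamp_ngon_def by auto

lemma edge: "{x,y} \<in> E \<Longrightarrow> x \<in> V \<and> y \<in> V \<and> x \<noteq> y"
proof -
  assume "{x,y} \<in> E"
  moreover have "graph V E" using vg unfolding veldkamp_graph_def by auto
  ultimately obtain a b where "a \<in> V" "b \<in> V" "a \<noteq> b" "{x,y} = {a,b}" unfolding graph_def by blast
  then show ?thesis by (auto simp: doubleton_eq_iff)
qed

lemma nbrs_iff: "x \<in> nbrs E v \<longleftrightarrow> {x,v} \<in> E" by (simp add: nbrs_def)

lemma orel: "v \<in> V \<Longrightarrow> opposition_rel (nbrs E v) (opp v)"
  using vg unfolding veldkamp_graph_def by auto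

lemma opp_sym: "v \<in> V \<Longrightarrow> opp v x y \<Longrightarrow> opp v y x"
  using orel unfolding opposition_rel_def by blast
lemma opp_irr: "v \<in> V \<Longrightarrow> \<not> opp v x x"
  using orel unfolding opposition_rel_def by blast
lemma opp_nb: "v \<in> V \<Longrightarrow> opp v x y \<Longrightarrow> x \<in> nbrs E v \<and> y \<in> nbrs E v"
  using orel unfolding opposition_rel_def by blast

lemma plump: "v \<in> V \<Longrightarrow> plump 2 (nbrs E v) (opp v)"
  using vg unfolding veldkamp_graph_def by auto

lemma plump2: "v \<in> V \<Longrightarrow> x \<in> nbrs E v \<Longrightarrow> y \<in> nbrs E v \<Longrightarrow> \<exists>z\<in>nbrs E v. opp v z x \<and> opp v z y"
proof -
  assume a: "v \<in> V" "x \<in> nbrs E v" "y \<in> nbrs E v"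
  have "card {x,y} \<le> 2" by (simp add: card_insert_le_m1)
  moreover have "\<forall>S. S \<subseteq> nbrs E v \<and> finite S \<and> card S \<le> 2 \<longrightarrow> (\<exists>x\<in>nbrs E v. \<forall>s\<in>S. opp v x s)"
    using plump a unfolding plump_def by blast
  ultimately have "\<exists>z\<in>nbrs E v. \<forall>s\<in>{x,y}. opp v z s"
    using a by (drule_tac x="{x,y}" in spec) simp
  then show ?thesis by auto
qed

lemma plump1: "v \<in> V \<Longrightarrow> x \<in> nbrs E v \<Longrightarrow> \<exists>z\<in>nbrs E v. opp v z x"
  using plump2 by blast

lemma plump0: "v \<in> V \<Longrightarrow> \<exists>z. z \<in> nbrs E v"
proof -
  assume "v \<in> V"
  then have "\<forall>S. S \<subseteq> nbrs E v \<and> finite S \<and> card S \<le> 2 \<longrightarrow> (\<exists>x\<in>nbrs E v. \<forall>s\<in>S. opp v x s)"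
    using plump unfolding plump_def by blast
  then have "\<exists>x\<in>nbrs E v. \<forall>s\<in>{}. opp v x s" by (drule_tac x="{}" in spec) simp
  then show ?thesis by blast
qed

lemma vp2: "1 \<le> k \<Longrightarrow> k \<le> n - 1 \<Longrightarrow> is_path V E p k \<Longrightarrow> straight opp p \<Longrightarrow>
   is_path V E q j \<Longrightarrow> straight opp q \<Longrightarrow> j \<le> k \<Longrightarrow> hd q = hd p \<Longrightarrow> last q = last p \<Longrightarrow> q = p"
  using ngon unfolding veldkamp_ngon_def by blast

lemma vp3: "is_path V E p (n + 1) \<Longrightarrow> straight opp p \<Longrightarrow>
        (\<exists>c. closed_path V E c (2 * n) \<and> straight_circuit opp c \<and>
             set p \<subseteq> set c \<and> path_edges p \<subseteq> path_edges c)"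
  using ngon unfolding veldkamp_ngon_def by blast

definition sp :: "(nat \<Rightarrow> 'a) \<Rightarrow> nat \<Rightarrow> bool" where
  "sp g m \<longleftrightarrow> (\<forall>k\<le>m. g k \<in> V) \<and> (\<forall>k<m. {g k, g (Suc k)} \<in> E) \<and>
     (\<forall>k. k + 2 \<le> m \<longrightarrow> opp (g (Suc k)) (g k) (g (Suc (Suc k))))"

lemma sp_list: "sp g m \<Longrightarrow> is_path V E (map g [0..<Suc m]) m \<and> straight opp (map g [0..<Suc m])"
proof -
  assume s: "sp g m"
  have w: "is_walk V E (map g [0..<Suc m]) m"
    using s unfolding sp_def is_walk_def
    by (auto simp: nth_Cons' simp del: upt_Suc)
  have nb: "\<forall>i. 2 \<le> i \<and> i \<le> m \<longrightarrow> g (i - 2) \<noteq> g i"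
  proof (intro allI impI)
    fix i assume i: "2 \<le> i \<and> i \<le> m"
    then obtain k where k: "i = Suc (Suc k)" by (metis add_2_eq_Suc le_Suc_ex)
    have "opp (g (Suc k)) (g k) (g (Suc (Suc k)))" using s i k unfolding sp_def by auto
    moreover have "g (Suc k) \<in> V" using s i k unfolding sp_def by auto
    ultimately show "g (i - 2) \<noteq> g i" using opp_irr k by force
  qed
  have "is_path V E (map g [0..<Suc m]) m" unfolding is_path_def using w nb
    by (auto simp del: upt_Suc)
  moreover have "straight opp (map g [0..<Suc m])" unfolding straight_def
  proof (intro allI impI)
    fix i assume i: "1 \<le> i \<and> i + 1 < length (map g [0..<Suc m])"
    then obtain k where k: "i = Suc k" by (metis Suc_le_D One_nat_def)
    then show "opp (map g [0..<Suc m] ! i) (map g [0..<Suc m] ! (i - 1)) (map g [0..<Suc m] ! (i + 1))"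
      using s i unfolding sp_def by (auto simp del: upt_Suc)
  qed
  ultimately show ?thesis by blast
qed

lemma list_sp: "is_walk V E xs m \<Longrightarrow> straight opp xs \<Longrightarrow> sp (\<lambda>k. xs!k) m"
  unfolding sp_def is_walk_def straight_def
  apply (intro conjI allI impI)
    apply (auto)[2]
  subgoal for k
    apply (drule spec[of _ "Suc k"]) by auto
  done

lemma sp_shift: "sp g m \<Longrightarrow> i \<le> j \<Longrightarrow> j \<le> m \<Longrightarrow> sp (\<lambda>k. g (i+k)) (j - i)"
proof -
  assume s: "sp g m" and ij: "i \<le> j" "j \<le> m"
  have o: "\<And>k. k + 2 \<le> j - i \<Longrightarrow> opp (g (Suc (i+k))) (g (i+k)) (g (Suc (Suc (i+k))))"
    using s ij unfolding sp_def by auto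
  show ?thesis unfolding sp_def using s ij o unfolding sp_def by auto
qed

lemma sp_rev: "sp g m \<Longrightarrow> sp (\<lambda>k. g (m - k)) m"
proof -
  assume s: "sp g m"
  have a: "\<forall>k\<le>m. g (m - k) \<in> V" using s unfolding sp_def by auto
  have b: "\<forall>k<m. {g (m - k), g (m - Suc k)} \<in> E"
  proof (intro allI impI)
    fix k assume k: "k < m"
    have "{g (m - Suc k), g (Suc (m - Suc k))} \<in> E" using s k unfolding sp_def by auto
    moreover have "Suc (m - Suc k) = m - k" using k by auto
    ultimately show "{g (m - k), g (m - Suc k)} \<in> E" by (simp add: insert_commute)
  qed
  have c: "\<forall>k. k + 2 \<le> m \<longrightarrow> opp (g (m - Suc k)) (g (m - k)) (g (m - Suc (Suc k)))"
  proof (intro allI impI)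
    fix k assume k: "k + 2 \<le> m"
    define j where "j = m - Suc (Suc k)"
    have e1: "m - Suc k = Suc j" "m - k = Suc (Suc j)" using k unfolding j_def by auto
    have "opp (g (Suc j)) (g j) (g (Suc (Suc j)))" using s k unfolding sp_def j_def by auto
    moreover have "g (Suc j) \<in> V" using s k unfolding sp_def j_def by auto
    ultimately show "opp (g (m - Suc k)) (g (m - k)) (g (m - Suc (Suc k)))"
      using e1 opp_sym j_def by auto
  qed
  show ?thesis unfolding sp_def by (intro conjI a b c)
qed

lemma sp_opp: "sp g m \<Longrightarrow> k + 2 \<le> m \<Longrightarrow> g k \<noteq> g (Suc (Suc k))"
proof -
  assume s: "sp g m" "k + 2 \<le> m"
  have "opp (g (Suc k)) (g k) (g (Suc (Suc k)))" "g (Suc k) \<in> V" using s unfolding sp_def by auto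
  then show ?thesis using opp_irr by metis
qed

lemma vp2f: "1 \<le> k \<Longrightarrow> k \<le> n - 1 \<Longrightarrow> sp g k \<Longrightarrow> sp q j \<Longrightarrow> j \<le> k \<Longrightarrow> q 0 = g 0 \<Longrightarrow> q j = g k
   \<Longrightarrow> j = k \<and> (\<forall>i\<le>k. q i = g i)"
proof -
  assume a: "1 \<le> k" "k \<le> n - 1" "sp g k" "sp q j" "j \<le> k" "q 0 = g 0" "q j = g k"
  have hd: "\<And>f m. hd (map f [0..<Suc m]) = f 0" by (simp add: hd_map del: upt_Suc)
  have lst: "\<And>f m. last (map f [0..<Suc m]) = f m" by (simp add: last_map del: upt_Suc)
  have "map q [0..<Suc j] = map g [0..<Suc k]"
    apply (rule vp2[OF a(1,2)])
    apply (rule conjunct1[OF sp_list[OF a(3)]])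
    apply (rule conjunct2[OF sp_list[OF a(3)]])
    apply (rule conjunct1[OF sp_list[OF a(4)]])
    apply (rule conjunct2[OF sp_list[OF a(4)]])
    apply (rule a(5))
     apply (simp only: hd a(6))
    apply (simp only: lst a(7))
    done
  note eq = this
  have l: "j = k" using arg_cong[OF eq, of length] by (simp del: upt_Suc)
  have "\<forall>i\<le>k. q i = g i"
  proof (intro allI impI)
    fix i assume i: "i \<le> k"
    then have "map q [0..<Suc j] ! i = map g [0..<Suc k] ! i" using eq by simp
    then show "q i = g i" using l i by (simp del: upt_Suc)
  qed
  then show ?thesis using l by blast
qed

definition apt :: "(nat \<Rightarrow> 'a) \<Rightarrow> bool" where
  "apt h \<longleftrightarrow> (\<forall>k. h k \<in> V \<and> {h k, h (Suc k)} \<in> E \<and> opp (h (Suc k)) (h k) (h (Suc (Suc k)))) \<and>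
     (\<forall>k. h (k + 2*n) = h k)"

lemma apt_sp: "apt h \<Longrightarrow> sp (\<lambda>k. h (a + k)) m"
  unfolding apt_def sp_def by auto

lemma noclosed: "sp r m \<Longrightarrow> 1 \<le> m \<Longrightarrow> m \<le> 2*n - 2 \<Longrightarrow> r 0 = r m \<Longrightarrow> False"
proof -
  assume a: "sp r m" "1 \<le> m" "m \<le> 2*n - 2" "r 0 = r m"
  show False
  proof (cases "m = 1")
    case True
    then have "{r 0, r 1} \<in> E" using a unfolding sp_def by auto
    then have "{r 0, r 0} \<in> E" using a(4) True by simp
    then show False using edge by blast
  next
    case False
    define aa where "aa = m div 2"
    define b where "b = m - aa"
    have ab: "1 \<le> aa" "aa \<le> b" "b \<le> n - 1" "aa + b = m" using False a(2,3) unfolding aa_def b_def by auto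
    have s1: "sp r b" using sp_shift[OF a(1), of 0 b] ab by simp
    have s2: "sp (\<lambda>k. r (m - k)) aa"
      using sp_shift[OF sp_rev[OF a(1)], of 0 aa] ab by simp
    have "aa = b \<and> (\<forall>i\<le>b. r (m - i) = r i)"
      apply (rule vp2f[OF _ ab(3) s1 s2 ab(2)]) using ab a(4) by auto
    then have eqab: "aa = b" and rr: "\<forall>i\<le>b. r (m - i) = r i" by auto
    from rr have "r (m - (b - 1)) = r (b - 1)" by simp
    moreover have "m - (b - 1) = Suc (Suc (b - 1))" using ab eqab by auto
    ultimately have "r (b - 1) = r (Suc (Suc (b - 1)))" by simp
    moreover have "b - 1 + 2 \<le> m" using ab by auto
    ultimately show False using sp_opp[OF a(1)] by blast
  qed
qed

lemma mod_helper: "(N::int) \<ge> 4 \<Longrightarrow> (d = 1 \<or> d = -1) \<Longrightarrow> z mod N \<noteq> (z + 2*d) mod N"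
proof
  assume N: "N \<ge> 4" and d: "d = 1 \<or> d = -1" and e: "z mod N = (z + 2*d) mod N"
  then have "N dvd (z + 2*d) - z" by (metis mod_eq_dvd_iff)
  then have "N dvd 2*d" by simp
  then have "N dvd 2" using d by auto
  then show False using N zdvd_imp_le by fastforce
qed

lemma CL: "sp g (Suc n) \<Longrightarrow> \<exists>h. apt h \<and> (\<forall>j\<le>Suc n. h j = g j)"
proof -
  assume sg: "sp g (Suc n)"
  define p where "p = map g [0..<Suc (Suc n)]"
  have pp: "is_path V E p (n+1)" "straight opp p" using sp_list[OF sg] unfolding p_def by auto
  obtain c where c: "closed_path V E c (2 * n)" "straight_circuit opp c"
      "set p \<subseteq> set c" "path_edges p \<subseteq> path_edges c"
    using vp3[OF pp] by blast
  define N where "N = 2 * n"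
  have N4: "N \<ge> 4" using n2 unfolding N_def by auto
  have cw: "is_walk V E c N" and cnb: "\<forall>i. 2 \<le> i \<and> i \<le> N \<longrightarrow> c ! (i - 2) \<noteq> c ! i"
    using c(1) unfolding closed_path_def is_path_def N_def by auto
  have lc: "length c = Suc N" using cw unfolding is_walk_def by auto
  have cV: "set c \<subseteq> V" using cw unfolding is_walk_def by auto
  have cE: "\<forall>i<N. {c!i, c!Suc i} \<in> E" using cw unfolding is_walk_def by auto
  have cN: "c ! N = c ! 0"
  proof -
    have "hd c = last c" using c(1) unfolding closed_path_def by auto
    moreover have "c \<noteq> []" using lc by auto
    ultimately show ?thesis using lc by (simp add: hd_conv_nth last_conv_nth)
  qed
  have peE: "path_edges c \<subseteq> E" using cE lc unfolding path_edges_def by auto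
  have inpe: "\<And>i. i < N \<Longrightarrow> {c!i, c!Suc i} \<in> path_edges c" using lc unfolding path_edges_def by auto
  have cstr: "straight opp c"
  proof -
    have "is_path (set c) (path_edges c) c N"
      unfolding is_path_def is_walk_def using lc inpe cnb by auto
    then show ?thesis using c(2) unfolding straight_circuit_def by blast
  qed
  have spc: "sp (\<lambda>k. c!k) N" by (rule list_sp[OF cw cstr])
  have dist: "\<And>i j. i < j \<Longrightarrow> j < N \<Longrightarrow> c!i \<noteq> c!j"
  proof
    fix i j assume ij: "i < j" "j < N" and eq: "c!i = c!j"
    show False
    proof (cases "j - i = N - 1")
      case True
      then have "i = 0" "j = N - 1" using ij by auto
      have "N - 1 < N" using N4 by auto
      then have "{c!(N-1), c!Suc (N-1)} \<in> E" using cE by blast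
      moreover have "Suc (N - 1) = N" using N4 by auto
      ultimately have "{c!0, c!0} \<in> E" using eq cN \<open>i = 0\<close> \<open>j = N - 1\<close> by auto
      then show False using edge by blast
    next
      case False
      have s: "sp (\<lambda>k. c!(i+k)) (j - i)" using sp_shift[OF spc, of i j] ij by auto
      show False
        apply (rule noclosed[OF s])
        using ij False eq unfolding N_def by auto
    qed
  qed
  define f where "f z = c ! nat (z mod int N)" for z
  have Npos: "int N > 0" using N4 by auto
  have fin: "\<And>z. f z \<in> set c"
  proof -
    fix z
    have "nat (z mod int N) < N" using Npos by (simp add: nat_less_iff)
    then show "f z \<in> set c" unfolding f_def using lc by auto
  qed
  have feq: "\<And>z w. f z = f w \<Longrightarrow> z mod int N = w mod int N"
  proof (rule ccontr)
    fix z w assume e: "f z = f w" and ne: "z mod int N \<noteq> w mod int N"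
    have lz: "nat (z mod int N) < N" "nat (w mod int N) < N" using Npos by (simp_all add: nat_less_iff)
    have "nat (z mod int N) \<noteq> nat (w mod int N)" using ne Npos
      by (simp add: nat_eq_iff2)
    then have "nat (z mod int N) < nat (w mod int N) \<or> nat (w mod int N) < nat (z mod int N)" by linarith
    then show False using dist lz e unfolding f_def by metis
  qed
  have fcong: "\<And>z w. z mod int N = w mod int N \<Longrightarrow> f z = f w" unfolding f_def by simp
  have fsuc: "\<And>i. i < N \<Longrightarrow> f (int i) = c!i \<and> f (int i + 1) = c!Suc i"
  proof -
    fix i assume i: "i < N"
    have a: "f (int i) = c!i" unfolding f_def using i by (simp add: nat_mod_distrib)
    have b: "f (int i + 1) = c!Suc i"
    proof (cases "Suc i < N")
      case True
      have m: "(int i + 1) mod int N = int (Suc i)" using True by simp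
      have "nat (int (Suc i)) = Suc i" by (rule nat_int)
      then show ?thesis unfolding f_def m by simp
    next
      case False then have "Suc i = N" using i by auto
      then have "int i + 1 = int N" by simp
      then have "(int i + 1) mod int N = 0" by simp
      then show ?thesis unfolding f_def using cN \<open>Suc i = N\<close> by simp
    qed
    show "f (int i) = c!i \<and> f (int i + 1) = c!Suc i" using a b by blast
  qed
  have fz_nat: "\<And>z. \<exists>i<N. f z = f (int i) \<and> f (z + 1) = f (int i + 1)"
  proof -
    fix z
    define i where "i = nat (z mod int N)"
    have i: "i < N" "int i = z mod int N" unfolding i_def using Npos by (simp_all add: nat_less_iff)
    have "f z = f (int i)" by (rule fcong) (simp add: i(2))
    moreover have "f (z+1) = f (int i + 1)" by (rule fcong) (simp add: i(2) mod_add_left_eq)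
    ultimately show "\<exists>i<N. f z = f (int i) \<and> f (z + 1) = f (int i + 1)" using i by blast
  qed
  have fedge: "\<And>z. {f z, f (z+1)} \<in> path_edges c"
  proof -
    fix z
    obtain i where i: "i<N" "f z = f (int i)" "f (z+1) = f (int i + 1)" using fz_nat by blast
    then have "{f z, f (z+1)} = {c!i, c!Suc i}" using fsuc[OF i(1)] by simp
    then show "{f z, f (z+1)} \<in> path_edges c" using inpe[OF i(1)] by simp
  qed
  have pef: "\<And>e. e \<in> path_edges c \<Longrightarrow> \<exists>z. e = {f z, f (z+1)}"
  proof -
    fix e assume "e \<in> path_edges c"
    then obtain i where "e = {c!i, c!Suc i}" "Suc i < length c" unfolding path_edges_def by auto
    then have "i < N" using lc by simp
    then show "\<exists>z. e = {f z, f (z+1)}" using fsuc \<open>e = {c!i, c!Suc i}\<close> by (intro exI[of _ "int i"]) simp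
  qed
  have adj: "\<And>z y. {f z, y} \<in> path_edges c \<Longrightarrow> y = f (z+1) \<or> y = f (z-1)"
  proof -
    fix z y assume "{f z, y} \<in> path_edges c"
    then obtain w where w: "{f z, y} = {f w, f (w+1)}" using pef by blast
    then have "(f z = f w \<and> y = f (w+1)) \<or> (f z = f (w+1) \<and> y = f w)" by (auto simp: doubleton_eq_iff)
    then show "y = f (z+1) \<or> y = f (z-1)"
    proof
      assume a: "f z = f w \<and> y = f (w+1)"
      then have "z mod int N = w mod int N" using feq by blast
      then have "(z+1) mod int N = (w+1) mod int N" by (metis mod_add_left_eq)
      then show ?thesis using a fcong by metis
    next
      assume a: "f z = f (w+1) \<and> y = f w"
      then have "z mod int N = (w+1) mod int N" using feq by blast
      then have "(z-1) mod int N = w mod int N" by (metis mod_diff_left_eq add_diff_cancel_right')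
      then show ?thesis using a fcong by metis
    qed
  qed
  have "g 0 \<in> set p" unfolding p_def by (simp del: upt_Suc)
  then have "g 0 \<in> set c" using c(3) by auto
  then obtain i0 where i0: "i0 < Suc N" "g 0 = c ! i0" using lc by (metis in_set_conv_nth)
  obtain z0 where z0: "g 0 = f z0"
  proof (cases "i0 < N")
    case True
    have "g 0 = f (int i0)" using fsuc[OF True] i0 by simp
    then show ?thesis by (rule that)
  next
    case False then have "i0 = N" using i0 by auto
    then show ?thesis using that[of 0] i0 cN unfolding f_def by simp
  qed
  have gpe: "\<And>j. j < Suc n \<Longrightarrow> {g j, g (Suc j)} \<in> path_edges c"
  proof -
    fix j assume j: "j < Suc n"
    have "{p!j, p!Suc j} \<in> path_edges p" unfolding path_edges_def p_def using j by auto
    moreover have "p!j = g j" "p!Suc j = g (Suc j)" unfolding p_def using j by (simp_all del: upt_Suc)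
    ultimately show "{g j, g (Suc j)} \<in> path_edges c" using c(4) by auto
  qed
  have "{f z0, g 1} \<in> path_edges c" using gpe[of 0] z0 by simp
  then have "g 1 = f (z0+1) \<or> g 1 = f (z0 - 1)" by (rule adj)
  then obtain d :: int where d: "d = 1 \<or> d = -1" "g 1 = f (z0 + d)"
  proof
    assume "g 1 = f (z0+1)" then show ?thesis using that[of 1] by simp
  next
    assume "g 1 = f (z0-1)" then show ?thesis using that[of "-1"] by simp
  qed
  define h where "h k = f (z0 + d * int k)" for k
  have hsuc: "\<And>k. h (Suc k) = f (z0 + d * int k + d)" unfolding h_def by (simp add: algebra_simps)
  have hg: "\<And>j. Suc j \<le> Suc n \<Longrightarrow> h j = g j \<and> h (Suc j) = g (Suc j)"
  proof -
    fix j show "Suc j \<le> Suc n \<Longrightarrow> h j = g j \<and> h (Suc j) = g (Suc j)"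
    proof (induction j)
      case 0 then show ?case using z0 d unfolding h_def by simp
    next
      case (Suc j)
      then have IH: "h j = g j" "h (Suc j) = g (Suc j)" by auto
      define z where "z = z0 + d * int (Suc j)"
      have "{g (Suc j), g (Suc (Suc j))} \<in> path_edges c" using gpe Suc.prems by auto
      moreover have "g (Suc j) = f z" using IH unfolding h_def z_def by simp
      ultimately have o: "g (Suc (Suc j)) = f (z+1) \<or> g (Suc (Suc j)) = f (z-1)" using adj by auto
      have ne: "g j \<noteq> g (Suc (Suc j))" using sp_opp[OF sg, of j] Suc.prems by auto
      have h2: "h (Suc (Suc j)) = f (z + d)" unfolding h_def z_def by (simp add: algebra_simps)
      have h0: "h j = f (z - d)" unfolding h_def z_def by (simp add: algebra_simps)
      have "g (Suc (Suc j)) = h (Suc (Suc j))"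
        using o ne h2 h0 IH d by auto
      then show ?case using IH by simp
    qed
  qed
  have hpe: "\<And>k. {h k, h (Suc k)} \<in> path_edges c"
  proof -
    fix k
    define z where "z = z0 + d * int k"
    have e: "h k = f z" "h (Suc k) = f (z + d)" unfolding z_def using hsuc h_def by auto
    show "{h k, h (Suc k)} \<in> path_edges c"
      using d(1)
    proof
      assume "d = 1" then show ?thesis using e fedge by simp
    next
      assume "d = -1" then show ?thesis using e fedge[of "z - 1"] by (simp add: insert_commute)
    qed
  qed
  have hne: "\<And>k. h k \<noteq> h (Suc (Suc k))"
  proof
    fix k assume e: "h k = h (Suc (Suc k))"
    have "h (Suc (Suc k)) = f (z0 + d * int k + 2 * d)" unfolding h_def by (simp add: algebra_simps)
    then have "(z0 + d * int k) mod int N = (z0 + d * int k + 2 * d) mod int N"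
      using e feq unfolding h_def by metis
    then show False using mod_helper[of "int N" d "z0 + d * int k"] N4 d(1) by auto
  qed
  have hopp: "\<And>k. opp (h (Suc k)) (h k) (h (Suc (Suc k)))"
  proof -
    fix k
    define L where "L = [h k, h (Suc k), h (Suc (Suc k))]"
    have "is_path (set c) (path_edges c) L 2"
      unfolding is_path_def is_walk_def L_def
      using fin hpe hne unfolding h_def
      apply (intro conjI allI impI)
        apply simp
       apply auto[1]
      subgoal for i using hpe[of k] hpe[of "Suc k"] unfolding h_def by (cases i) (auto simp: less_Suc_eq)
      subgoal for i using hne[of k] unfolding h_def by (auto simp: le_Suc_eq)
      done
    then have "straight opp L" using c(2) unfolding straight_circuit_def by blast
    then show "opp (h (Suc k)) (h k) (h (Suc (Suc k)))" unfolding straight_def L_def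
      by (drule_tac x=1 in spec) simp
  qed
  have hper: "\<And>k. h (k + 2*n) = h k"
  proof -
    fix k
    have "(z0 + d * int (k + 2*n)) mod int N = (z0 + d * int k + d * int N) mod int N"
      unfolding N_def by (simp add: algebra_simps)
    also have "\<dots> = (z0 + d * int k) mod int N" by simp
    finally show "h (k + 2*n) = h k" unfolding h_def using fcong by blast
  qed
  have hV: "\<And>k. h k \<in> V" using fin cV unfolding h_def by blast
  have hE: "\<And>k. {h k, h (Suc k)} \<in> E" using hpe peE by blast
  have "apt h" unfolding apt_def
    using hV hE hopp hper by simp
  moreover have "\<forall>j\<le>Suc n. h j = g j"
  proof (intro allI impI)
    fix j assume "j \<le> Suc n"
    then show "h j = g j" using hg[of j] hg[of "j - 1"] by (cases j) auto
  qed
  ultimately show ?thesis by blast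
qed

lemma sp_ext: "sp Q m \<Longrightarrow> {Q m, x} \<in> E \<Longrightarrow> (1 \<le> m \<Longrightarrow> opp (Q m) (Q (m-1)) x)
   \<Longrightarrow> sp (\<lambda>k. if k \<le> m then Q k else x) (Suc m)"
proof -
  assume s: "sp Q m" and e: "{Q m, x} \<in> E" and o: "1 \<le> m \<Longrightarrow> opp (Q m) (Q (m-1)) x"
  have xV: "x \<in> V" using edge e by blast
  have a: "\<forall>k\<le>Suc m. (if k \<le> m then Q k else x) \<in> V" using s xV unfolding sp_def by auto
  have b: "\<forall>k<Suc m. {if k \<le> m then Q k else x, if Suc k \<le> m then Q (Suc k) else x} \<in> E"
  proof (intro allI impI)
    fix k assume k: "k < Suc m"
    show "{if k \<le> m then Q k else x, if Suc k \<le> m then Q (Suc k) else x} \<in> E"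
    proof (cases "k = m")
      case True then show ?thesis using e by simp
    next
      case False then have "k < m" using k by auto
      then show ?thesis using s unfolding sp_def by auto
    qed
  qed
  have c: "\<forall>k. k + 2 \<le> Suc m \<longrightarrow> opp (if Suc k \<le> m then Q (Suc k) else x) (if k \<le> m then Q k else x)
       (if Suc (Suc k) \<le> m then Q (Suc (Suc k)) else x)"
  proof (intro allI impI)
    fix k assume k: "k + 2 \<le> Suc m"
    show "opp (if Suc k \<le> m then Q (Suc k) else x) (if k \<le> m then Q k else x)
       (if Suc (Suc k) \<le> m then Q (Suc (Suc k)) else x)"
    proof (cases "k + 2 \<le> m")
      case True then show ?thesis using s unfolding sp_def by auto
    next
      case False then have "Suc k = m" using k by auto
      moreover have "opp (Q m) (Q (m-1)) x" using o \<open>Suc k = m\<close> by auto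
      ultimately show ?thesis by auto
    qed
  qed
  show ?thesis unfolding sp_def using a b c by blast
qed

lemma sp_pre: "sp A m \<Longrightarrow> {r, A 0} \<in> E \<Longrightarrow> (1 \<le> m \<Longrightarrow> opp (A 0) r (A 1))
   \<Longrightarrow> sp (\<lambda>k. if k = 0 then r else A (k - 1)) (Suc m)"
proof -
  assume s: "sp A m" and e: "{r, A 0} \<in> E" and o: "1 \<le> m \<Longrightarrow> opp (A 0) r (A 1)"
  have rV: "r \<in> V" using edge e by blast
  have a: "\<forall>k\<le>Suc m. (if k = 0 then r else A (k - 1)) \<in> V" using s rV unfolding sp_def by auto
  have b: "\<forall>k<Suc m. {if k = 0 then r else A (k - 1), if Suc k = 0 then r else A (Suc k - 1)} \<in> E"
  proof (intro allI impI)
    fix k assume k: "k < Suc m"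
    show "{if k = 0 then r else A (k - 1), if Suc k = 0 then r else A (Suc k - 1)} \<in> E"
    proof (cases k)
      case 0 then show ?thesis using e by simp
    next
      case (Suc j) then have "j < m" using k by auto
      then show ?thesis using s Suc unfolding sp_def by auto
    qed
  qed
  have c: "\<forall>k. k + 2 \<le> Suc m \<longrightarrow> opp (if Suc k = 0 then r else A (Suc k - 1)) (if k = 0 then r else A (k - 1))
       (if Suc (Suc k) = 0 then r else A (Suc (Suc k) - 1))"
  proof (intro allI impI)
    fix k assume k: "k + 2 \<le> Suc m"
    show "opp (if Suc k = 0 then r else A (Suc k - 1)) (if k = 0 then r else A (k - 1))
       (if Suc (Suc k) = 0 then r else A (Suc (Suc k) - 1))"
    proof (cases k)
      case 0 then show ?thesis using o k by simp
    next
      case (Suc j) then have "j + 2 \<le> m" using k by auto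
      then show ?thesis using s Suc unfolding sp_def by auto
    qed
  qed
  show ?thesis unfolding sp_def using a b c by blast
qed

lemma sp_edge: "sp g m \<Longrightarrow> k < m \<Longrightarrow> {g k, g (Suc k)} \<in> E" unfolding sp_def by auto
lemma sp_V: "sp g m \<Longrightarrow> k \<le> m \<Longrightarrow> g k \<in> V" unfolding sp_def by auto

lemma G: "sp Q n \<Longrightarrow> x \<in> nbrs E (Q n) \<Longrightarrow> opp (Q n) x (Q (n-1))
   \<Longrightarrow> \<exists>Q'. sp Q' n \<and> Q' 0 = Q 0 \<and> Q' n = Q n \<and> Q' (n-1) = x"
proof -
  assume s: "sp Q n" and x: "x \<in> nbrs E (Q n)" and o: "opp (Q n) x (Q (n-1))"
  have QV: "Q n \<in> V" using sp_V[OF s] by auto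
  have e: "{Q n, x} \<in> E" using x nbrs_iff by (simp add: insert_commute)
  have sg: "sp (\<lambda>k. if k \<le> n then Q k else x) (Suc n)"
    by (rule sp_ext[OF s e]) (use opp_sym[OF QV o] in auto)
  obtain h where h: "apt h" "\<forall>j\<le>Suc n. h j = (if j \<le> n then Q j else x)" using CL[OF sg] by blast
  define Q' where "Q' k = h (n + (n - k))" for k
  have "sp Q' n" unfolding Q'_def using sp_rev[OF apt_sp[OF h(1), of n n]] by simp
  moreover have "Q' 0 = Q 0"
  proof -
    have "Q' 0 = h (0 + 2*n)" unfolding Q'_def by (simp add: mult_2)
    also have "\<dots> = h 0" using h(1) unfolding apt_def by blast
    finally show ?thesis using h(2) by simp
  qed
  moreover have "Q' n = Q n" unfolding Q'_def using h(2) by simp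
  moreover have "Q' (n-1) = x"
  proof -
    have "n + (n - (n-1)) = Suc n" using n2 by auto
    then show ?thesis unfolding Q'_def using h(2) by simp
  qed
  ultimately show ?thesis by blast
qed

lemma main: "trivial_opp (nbrs E c0) (opp c0) \<Longrightarrow> sp P n \<Longrightarrow> P 0 = c0
   \<Longrightarrow> trivial_opp (nbrs E (P n)) (opp (P n))"
proof -
  assume tc: "trivial_opp (nbrs E c0) (opp c0)" and sP: "sp P n" and P0: "P 0 = c0"
  define b where "b = P n"
  have bV: "b \<in> V" using sp_V[OF sP] b_def by auto
  have c0V: "c0 \<in> V" using sp_V[OF sP] P0 by auto
  have sn: "Suc (n-1) = n" using n2 by auto
  have pn1: "P (n-1) \<in> nbrs E b"
  proof -
    have "n - 1 < n" using n2 by auto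
    then have "{P (n-1), P (Suc (n-1))} \<in> E" using sp_edge[OF sP] by blast
    then show ?thesis unfolding b_def using sn nbrs_iff by simp
  qed
  have reach: "\<And>z. z \<in> nbrs E b \<Longrightarrow> \<exists>Q. sp Q n \<and> Q 0 = c0 \<and> Q n = b \<and> Q (n-1) = z"
  proof -
    fix z assume z: "z \<in> nbrs E b"
    show "\<exists>Q. sp Q n \<and> Q 0 = c0 \<and> Q n = b \<and> Q (n-1) = z"
    proof (cases "z = P (n-1)")
      case True then show ?thesis using sP P0 b_def by blast
    next
      case False
      obtain w where w: "w \<in> nbrs E b" "opp b w z" "opp b w (P (n-1))" using plump2[OF bV z pn1] by blast
      obtain Q1 where Q1: "sp Q1 n" "Q1 0 = P 0" "Q1 n = P n" "Q1 (n-1) = w"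
        using G[OF sP, of w] w b_def by auto
      have "opp (Q1 n) z (Q1 (n-1))" using Q1 w opp_sym[OF bV] b_def by auto
      moreover have "z \<in> nbrs E (Q1 n)" using z Q1 b_def by simp
      ultimately obtain Q2 where "sp Q2 n" "Q2 0 = Q1 0" "Q2 n = Q1 n" "Q2 (n-1) = z"
        using G[OF Q1(1)] by blast
      then show ?thesis using Q1 P0 b_def by auto
    qed
  qed
  show ?thesis unfolding trivial_opp_def b_def[symmetric]
  proof (intro ballI impI)
    fix x y assume x: "x \<in> nbrs E b" and y: "y \<in> nbrs E b" and xy: "x \<noteq> y"
    obtain A where A: "sp A n" "A 0 = c0" "A n = b" "A (n-1) = x" using reach[OF x] by blast
    obtain B where B: "sp B n" "B 0 = c0" "B n = b" "B (n-1) = y" using reach[OF y] by blast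
    have sA1: "sp (\<lambda>k. A (1+k)) (n-1)" using sp_shift[OF A(1), of 1 n] n2 by auto
    have sB1: "sp (\<lambda>k. B (1+k)) (n-1)" using sp_shift[OF B(1), of 1 n] n2 by auto
    have n1: "1 \<le> n - 1" using n2 by auto
    have e1: "1 + (n - 1) = n" "1 + (n-2) = n - 1" using n2 by auto
    show "opp b x y"
    proof (cases "A 1 = B 1")
      case True
      have "n - 1 = n - 1 \<and> (\<forall>i\<le>n-1. B (1+i) = A (1+i))"
        apply (rule vp2f[OF n1 _ sA1 sB1])
        using True A(3) B(3) e1 by auto
      then have "B (1 + (n-2)) = A (1 + (n-2))" by auto
      then show ?thesis using e1 A(4) B(4) xy by simp
    next
      case False
      define r where "r = B 1"
      have eB: "{B 0, B (Suc 0)} \<in> E" using sp_edge[OF B(1)] n2 by auto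
      have eA: "{A 0, A (Suc 0)} \<in> E" using sp_edge[OF A(1)] n2 by auto
      have rn: "r \<in> nbrs E c0" using eB B(2) unfolding r_def by (simp add: nbrs_iff insert_commute)
      have an: "A 1 \<in> nbrs E c0" using eA A(2) by (simp add: nbrs_iff insert_commute)
      have rA: "r \<noteq> A 1" using False r_def by auto
      have o0: "opp (A 0) r (A 1)" using tc rn an rA A(2) unfolding trivial_opp_def by auto
      have er: "{r, A 0} \<in> E" using rn A(2) nbrs_iff by auto
      have sg: "sp (\<lambda>k. if k = 0 then r else A (k - 1)) (Suc n)"
        by (rule sp_pre[OF A(1) er]) (use o0 in auto)
      obtain h where h: "apt h" "\<forall>j\<le>Suc n. h j = (if j = 0 then r else A (j - 1))"
        using CL[OF sg] by blast
      have h0: "h 0 = r" using h(2) by auto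
      have hn: "h n = x" using h(2) A(4) n2 by auto
      have hsn: "h (Suc n) = b" using h(2) A(3) by auto
      define R where "R k = h (Suc n + (n - 1 - k))" for k
      have sR: "sp R (n-1)" unfolding R_def using sp_rev[OF apt_sp[OF h(1), of "Suc n" "n-1"]] by simp
      have R0: "R 0 = r"
      proof -
        have "Suc n + (n - 1 - 0) = 0 + 2*n" using n2 by auto
        then have "R 0 = h (0 + 2*n)" unfolding R_def by presburger
        also have "\<dots> = h 0" using h(1) unfolding apt_def by blast
        finally show ?thesis using h0 by simp
      qed
      have Rn: "R (n-1) = b" unfolding R_def using hsn by simp
      have "n - 1 = n - 1 \<and> (\<forall>i\<le>n-1. B (1+i) = R i)"
        apply (rule vp2f[OF n1 _ sR sB1])
        using R0 Rn B(3) e1 r_def by auto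
      then have "B (1 + (n-2)) = R (n-2)" by auto
      moreover have ee: "Suc n + (n - 1 - (n-2)) = Suc (Suc n)" using n2 by auto
      moreover have "R (n-2) = h (Suc (Suc n))" by (simp only: R_def ee)
      ultimately have hy: "h (Suc (Suc n)) = y" using e1 B(4) by simp
      have "opp (h (Suc n)) (h n) (h (Suc (Suc n)))" using h(1) unfolding apt_def by blast
      then show ?thesis using hy hn hsn by simp
    qed
  qed
qed

lemma ext2: "sp g 2 \<Longrightarrow> 2 \<le> m \<Longrightarrow> \<exists>P. sp P m \<and> P 0 = g 0 \<and> P 1 = g 1 \<and> P 2 = g 2"
proof (induction m)
  case 0 then show ?case by simp
next
  case (Suc m)
  show ?case
  proof (cases "m < 2")
    case True then have "Suc m = 2" using Suc.prems by auto
    then have "sp g (Suc m)" using Suc.prems(1) by metis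
    then show ?thesis by blast
  next
    case False
    then obtain P where P: "sp P m" "P 0 = g 0" "P 1 = g 1" "P 2 = g 2" using Suc by auto
    have PV: "P m \<in> V" using sp_V[OF P(1)] by auto
    have sm: "Suc (m - 1) = m" using False by auto
    have "m - 1 < m" using False by auto
    then have "{P (m-1), P (Suc (m-1))} \<in> E" using sp_edge[OF P(1)] by blast
    then have pm: "P (m-1) \<in> nbrs E (P m)" using sm nbrs_iff by simp
    obtain w where w: "w \<in> nbrs E (P m)" "opp (P m) w (P (m-1))" using plump1[OF PV pm] by blast
    have e: "{P m, w} \<in> E" using w(1) nbrs_iff by (simp add: insert_commute)
    have "sp (\<lambda>k. if k \<le> m then P k else w) (Suc m)"
      by (rule sp_ext[OF P(1) e]) (use opp_sym[OF PV w(2)] in auto)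
    then show ?thesis using P False by (intro exI[of _ "\<lambda>k. if k \<le> m then P k else w"]) auto
  qed
qed

lemma sp3: "{a, m} \<in> E \<Longrightarrow> {m, e} \<in> E \<Longrightarrow> opp m a e \<Longrightarrow>
   sp (\<lambda>k. if k = 0 then a else if k = 1 then m else e) 2"
  unfolding sp_def using edge by (auto simp: less_Suc_eq numeral_2_eq_2 le_Suc_eq)

lemma step2: "trivial_opp (nbrs E a) (opp a) \<Longrightarrow> {a, m} \<in> E \<Longrightarrow> {m, c} \<in> E
   \<Longrightarrow> trivial_opp (nbrs E c) (opp c)"
proof -
  assume ta: "trivial_opp (nbrs E a) (opp a)" and am: "{a, m} \<in> E" and mc: "{m, c} \<in> E"
  have mV: "m \<in> V" using edge am by blast
  have an: "a \<in> nbrs E m" using am nbrs_iff by simp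
  have cn: "c \<in> nbrs E m" using mc nbrs_iff by (simp add: insert_commute)
  obtain e where e: "e \<in> nbrs E m" "opp m e a" "opp m e c" using plump2[OF mV an cn] by blast
  have me: "{m, e} \<in> E" using e(1) nbrs_iff by (simp add: insert_commute)
  have s3: "sp (\<lambda>k. if k = 0 then a else if k = 1 then m else e) 2"
    by (rule sp3[OF am me]) (use opp_sym[OF mV e(2)] in auto)
  obtain P where P: "sp P n" "P 0 = a" "P 1 = m" "P 2 = e" using ext2[OF s3 n2] by auto
  have tP: "trivial_opp (nbrs E (P n)) (opp (P n))" by (rule main[OF ta P(1) P(2)])
  define P' where "P' k = (if k = 0 then c else P k)" for k
  have sP1: "sp (\<lambda>k. P (1 + k)) (n - 1)" using sp_shift[OF P(1), of 1 n] n2 by auto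
  have "sp (\<lambda>k. if k = 0 then c else P (1 + (k - 1))) (Suc (n-1))"
    apply (rule sp_pre[OF sP1])
    using mc P(3) opp_sym[OF mV e(3)] P(4) by (auto simp: insert_commute numeral_2_eq_2)
  moreover have "Suc (n-1) = n" using n2 by auto
  moreover have "(\<lambda>k. if k = 0 then c else P (1 + (k - 1))) = P'"
    unfolding P'_def by auto
  ultimately have sP': "sp P' n" by simp
  have sR: "sp (\<lambda>k. P' (n - k)) n" by (rule sp_rev[OF sP'])
  have "P' n = P n" unfolding P'_def using n2 by auto
  then have "trivial_opp (nbrs E (P' (n - n))) (opp (P' (n - n)))"
    using main[OF _ sR] tP by simp
  then show ?thesis unfolding P'_def by simp
qed

definition wk :: "(nat \<Rightarrow> 'a) \<Rightarrow> nat \<Rightarrow> bool" where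
  "wk g L \<longleftrightarrow> (\<forall>i\<le>L. g i \<in> V) \<and> (\<forall>i<L. {g i, g (Suc i)} \<in> E)"

lemma even_walk: "wk g (2*k) \<Longrightarrow> trivial_opp (nbrs E (g 0)) (opp (g 0))
   \<Longrightarrow> trivial_opp (nbrs E (g (2*k))) (opp (g (2*k)))"
proof (induction k arbitrary: g)
  case 0 then show ?case by simp
next
  case (Suc k)
  have e1: "{g 0, g 1} \<in> E" "{g 1, g 2} \<in> E" using Suc.prems(1) unfolding wk_def
    by (auto simp: numeral_2_eq_2)
  have t2: "trivial_opp (nbrs E (g 2)) (opp (g 2))" by (rule step2[OF Suc.prems(2) e1])
  have w: "wk (\<lambda>i. g (i + 2)) (2*k)" using Suc.prems(1) unfolding wk_def by auto
  have "trivial_opp (nbrs E ((\<lambda>i. g (i + 2)) (2*k))) (opp ((\<lambda>i. g (i + 2)) (2*k)))"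
    by (rule Suc.IH[OF w]) (use t2 in \<open>simp add: numeral_2_eq_2\<close>)
  moreover have "2 * k + 2 = 2 * Suc k" by simp
  ultimately show ?case by metis
qed

lemma walk_wk: "is_walk V E xs L \<Longrightarrow> wk (\<lambda>i. xs ! i) L \<and> hd xs = xs ! 0 \<and> last xs = xs ! L"
proof -
  assume w: "is_walk V E xs L"
  have l: "length xs = Suc L" and s: "set xs \<subseteq> V" and e: "\<forall>i<L. {xs ! i, xs ! Suc i} \<in> E"
    using w unfolding is_walk_def by auto
  have "\<forall>i\<le>L. xs ! i \<in> V"
  proof (intro allI impI)
    fix i assume "i \<le> L"
    then have "i < length xs" using l by simp
    then show "xs ! i \<in> V" using s nth_mem by blast
  qed
  then have "wk (\<lambda>i. xs ! i) L" unfolding wk_def using e by simp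
  moreover have "xs \<noteq> []" using l by auto
  ultimately show ?thesis using l by (simp add: hd_conv_nth last_conv_nth)
qed

end

theorem proposition2p17:
  fixes V :: "'a set" and E :: "'a set set" and opp :: "'a \<Rightarrow> 'a \<Rightarrow> 'a \<Rightarrow> bool"
    and n :: nat and v :: 'a
  assumes "veldkamp_ngon V E opp n"
    and "v \<in> V"
    and "trivial_opp (nbrs E v) (opp v)"
  shows "(\<forall>w\<in>V. even (gdist V E v w) \<longrightarrow> trivial_opp (nbrs E w) (opp w))
       \<and> (odd n \<longrightarrow> (\<forall>w\<in>V. trivial_opp (nbrs E w) (opp w)))"
proof -
  interpret vk V E opp n by unfold_locales (rule assms(1))
  have conn: "connected_graph V E" using assms(1) unfolding veldkamp_ngon_def by auto
  have walk_ex: "\<And>w. w \<in> V \<Longrightarrow> \<exists>xs k. is_walk V E xs k \<and> hd xs = v \<and> last xs = w"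
    using conn assms(2) unfolding connected_graph_def by blast
  have ev: "\<And>u xs L. trivial_opp (nbrs E u) (opp u) \<Longrightarrow> is_walk V E xs L \<Longrightarrow> hd xs = u \<Longrightarrow> even L
      \<Longrightarrow> trivial_opp (nbrs E (last xs)) (opp (last xs))"
  proof -
    fix u xs L assume t: "trivial_opp (nbrs E u) (opp u)" and w: "is_walk V E xs L" and h: "hd xs = u" and e: "even L"
    obtain k where k: "L = 2*k" using e by blast
    show "trivial_opp (nbrs E (last xs)) (opp (last xs))"
      using even_walk[of "\<lambda>i. xs ! i" k] walk_wk[OF w] t h k by auto
  qed
  have part1: "\<forall>w\<in>V. even (gdist V E v w) \<longrightarrow> trivial_opp (nbrs E w) (opp w)"
  proof (intro ballI impI)
    fix w assume wV: "w \<in> V" and e: "even (gdist V E v w)"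
    have "\<exists>k xs. is_walk V E xs k \<and> hd xs = v \<and> last xs = w" using walk_ex[OF wV] by blast
    then have "\<exists>xs. is_walk V E xs (gdist V E v w) \<and> hd xs = v \<and> last xs = w"
      unfolding gdist_def by (rule LeastI_ex)
    then obtain xs where "is_walk V E xs (gdist V E v w)" "hd xs = v" "last xs = w" by blast
    then show "trivial_opp (nbrs E w) (opp w)" using ev[OF assms(3)] e by blast
  qed
  have part2: "odd n \<longrightarrow> (\<forall>w\<in>V. trivial_opp (nbrs E w) (opp w))"
  proof (intro impI ballI)
    assume on: "odd n"
    fix w assume wV: "w \<in> V"
    obtain m where m: "m \<in> nbrs E v" using plump0[OF assms(2)] by blast
    have vm: "{v, m} \<in> E" using m nbrs_iff by (simp add: insert_commute)
    have mV: "m \<in> V" using edge vm by blast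
    have vn: "v \<in> nbrs E m" using vm nbrs_iff by simp
    obtain e where e: "e \<in> nbrs E m" "opp m e v" using plump1[OF mV vn] by blast
    have me: "{m, e} \<in> E" using e(1) nbrs_iff by (simp add: insert_commute)
    have s3: "sp (\<lambda>k. if k = 0 then v else if k = 1 then m else e) 2"
      by (rule sp3[OF vm me]) (use opp_sym[OF mV e(2)] in auto)
    obtain P where P: "sp P n" "P 0 = v" using ext2[OF s3 n2] by auto
    have tP: "trivial_opp (nbrs E (P n)) (opp (P n))" by (rule main[OF assms(3) P(1) P(2)])
    obtain xs L where xs: "is_walk V E xs L" "hd xs = v" "last xs = w" using walk_ex[OF wV] by blast
    show "trivial_opp (nbrs E w) (opp w)"
    proof (cases "even L")
      case True then show ?thesis using ev[OF assms(3) xs(1,2)] xs(3) by blast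
    next
      case False
      have wx: "wk (\<lambda>i. xs ! i) L" "xs ! 0 = v" "xs ! L = w" using walk_wk[OF xs(1)] xs by auto
      define W where "W i = (if i \<le> n then P (n - i) else xs ! (i - n))" for i
      have Wge: "\<And>i. n \<le> i \<Longrightarrow> W i = xs ! (i - n)" unfolding W_def using P(2) wx(2) by auto
      have wnl: "wk W (n + L)" unfolding wk_def
      proof (intro conjI allI impI)
        fix i assume i: "i \<le> n + L"
        show "W i \<in> V"
        proof (cases "i \<le> n")
          case True then show ?thesis unfolding W_def using sp_V[OF P(1)] by auto
        next
          case False then show ?thesis using Wge[of i] wx(1) i unfolding wk_def by auto
        qed
      next
        fix i assume i: "i < n + L"
        show "{W i, W (Suc i)} \<in> E"
        proof (cases "i < n")
          case True
          have "{P (n - Suc i), P (Suc (n - Suc i))} \<in> E" using sp_edge[OF P(1)] True by auto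
          moreover have "Suc (n - Suc i) = n - i" using True by auto
          ultimately show ?thesis unfolding W_def using True by (auto simp: insert_commute)
        next
          case False
          then have "W i = xs ! (i - n)" "W (Suc i) = xs ! Suc (i - n)" using Wge[of i] Wge[of "Suc i"]
            by (auto simp: Suc_diff_le)
          moreover have "i - n < L" using False i by auto
          ultimately show ?thesis using wx(1) unfolding wk_def by auto
        qed
      qed
      have "even (n + L)" using on False by auto
      then obtain k where k: "n + L = 2*k" by blast
      have W0: "W 0 = P n" unfolding W_def by simp
      have wk2: "wk W (2*k)" using wnl k by simp
      have "trivial_opp (nbrs E (W (2*k))) (opp (W (2*k)))"
        by (rule even_walk[OF wk2]) (simp add: W0 tP)
      moreover have "2*k - n = L" using k by simp
      moreover have "W (2*k) = w" using Wge[of "n+L"] k wx(3) \<open>2*k - n = L\<close> by simp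
      ultimately show ?thesis by simp
    qed
  qed
  show ?thesis using part1 part2 by blast
qed
end
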